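(* Let $\mathfrak{g}$ be a Leibniz algebra whose Schur $\mathrm{Lie}$-multiplier $\mathcal{M}^{\mathrm{Lie}}(\mathfrak{g})$ is finite-dimensional. Then any two $\mathrm{Lie}$-stem covers of $\mathfrak{g}$ are $\mathrm{Lie}$-isoclinic.
   Context: Fix a field $\mathbb{K}$ with $\frac12\in\mathbb{K}$. A Leibniz algebra is a $\mathbb{K}$-vector space with a bilinear bracket satisfying $[x,[y,z]]=[[x,y],z]-[[x,z],y]$. $\mathfrak{p}^{\mathrm{ann}}$ is the span of all $[x,x]$, $\mathfrak{p}_{\mathrm{Lie}}=\mathfrak{p}/\mathfrak{p}^{\mathrm{ann}}$. $[\mathfrak{m},\mathfrak{n}]_{\mathrm{Lie}}$ is the span of all $[m,n]+[n,m]$. $Z_{\mathrm{Lie}}(\mathfrak{p})=\{z:[x,z]+[z,x]=0\ \forall x\}$. An extension $0\to\mathfrak{m}\to\mathfrak{p}\to\mathfrak{g}\to0$ is $\mathrm{Lie}$-central if $\mathfrak{m}\subseteq Z_{\mathrm{Lie}}(\mathfrak{p})$; a $\mathrm{Lie}$-stem extension if moreover $\mathfrak{p}_{\mathrm{Lie}}\to\mathfrak{g}_{\mathrm{Lie}}$ is an isomorphism (equivalently $\mathfrak{m}\subseteq\mathfrak{p}^{\mathrm{ann}}$); a $\mathrm{Lie}$-stem cover if moreover the induced map $\mathcal{M}^{\mathrm{Lie}}(\mathfrak{p})\to\mathcal{M}^{\mathrm{Lie}}(\mathfrak{g})$ is zero. Here for a free presentation $0\to\mathfrak{r}\to\mathfrak{f}\to\mathfrak{g}\to0$,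 $\mathcal{M}^{\mathrm{Lie}}(\mathfrak{g})=\frac{\mathfrak{r}\cap[\mathfrak{f},\mathfrak{f}]_{\mathrm{Lie}}}{[\mathfrak{f},\mathfrak{r}]_{\mathrm{Lie}}}$. For $\mathrm{Lie}$-central extensions $0\to\mathfrak{n}_i\to\mathfrak{g}_i\xrightarrow{\pi_i}\mathfrak{q}_i\to0$ ($i=1,2$), let $C_i:\mathfrak{q}_i\times\mathfrak{q}_i\to[\mathfrak{g}_i,\mathfrak{g}_i]_{\mathrm{Lie}}$, $C_i(\pi_i(x),\pi_i(y))=[x,y]+[y,x]$ (well defined). The extensions are $\mathrm{Lie}$-isoclinic if there are isomorphisms $\eta:\mathfrak{q}_1\to\mathfrak{q}_2$ and $\xi:[\mathfrak{g}_1,\mathfrak{g}_1]_{\mathrm{Lie}}\to[\mathfrak{g}_2,\mathfrak{g}_2]_{\mathrm{Lie}}$ with $\xi\circ C_1=C_2\circ(\eta\times\eta)$. *)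

theory Defs
  imports Complex_Main "HOL-Library.Poly_Mapping"
begin

text \<open>A Leibniz algebra over the field 'k is represented by a type 'v (its carrier is UNIV),
  a scalar multiplication s and a bracket b.\<close>

definition leibniz_algebra :: "('k::field \<Rightarrow> 'v::ab_group_add \<Rightarrow> 'v) \<Rightarrow> ('v \<Rightarrow> 'v \<Rightarrow> 'v) \<Rightarrow> bool" where
  "leibniz_algebra s b \<longleftrightarrow> vector_space s
     \<and> (\<forall>x y z. b x (y + z) = b x y + b x z \<and> b (x + y) z = b x z + b y z)
     \<and> (\<forall>c x y. b (s c x) y = s c (b x y) \<and> b x (s c y) = s c (b x y))
     \<and> (\<forall>x y z. b x (b y z) = b (b x y) z - b (b x z) y)"

definition leib_hom ::
  "('k::field \<Rightarrow> 'v::ab_group_add \<Rightarrow> 'v) \<Rightarrow> ('v \<Rightarrow> 'v \<Rightarrow> 'v) \<Rightarrow>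
   ('k \<Rightarrow> 'w::ab_group_add \<Rightarrow> 'w) \<Rightarrow> ('w \<Rightarrow> 'w \<Rightarrow> 'w) \<Rightarrow> ('v \<Rightarrow> 'w) \<Rightarrow> bool" where
  "leib_hom s1 b1 s2 b2 f \<longleftrightarrow> Vector_Spaces.linear s1 s2 f \<and> (\<forall>x y. f (b1 x y) = b2 (f x) (f y))"

definition lie_sym :: "('k::field \<Rightarrow> 'v::ab_group_add \<Rightarrow> 'v) \<Rightarrow> ('v \<Rightarrow> 'v \<Rightarrow> 'v) \<Rightarrow> 'v set \<Rightarrow> 'v set \<Rightarrow> 'v set" where
  "lie_sym s b A B = module.span s {b x y + b y x | x y. x \<in> A \<and> y \<in> B}"

definition leib_ann :: "('k::field \<Rightarrow> 'v::ab_group_add \<Rightarrow> 'v) \<Rightarrow> ('v \<Rightarrow> 'v \<Rightarrow> 'v) \<Rightarrow> 'v set" where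
  "leib_ann s b = module.span s {b x x | x. True}"

definition lie_center :: "('v::ab_group_add \<Rightarrow> 'v \<Rightarrow> 'v) \<Rightarrow> 'v set" where
  "lie_center b = {z. \<forall>x. b x z + b z x = 0}"

text \<open>An extension 0 -> m -> p -> g -> 0 is given by a surjective homomorphism pi : p -> g,
  with m = ker pi.\<close>
definition lie_central_ext ::
  "('k::field \<Rightarrow> 'p::ab_group_add \<Rightarrow> 'p) \<Rightarrow> ('p \<Rightarrow> 'p \<Rightarrow> 'p) \<Rightarrow>
   ('k \<Rightarrow> 'g::ab_group_add \<Rightarrow> 'g) \<Rightarrow> ('g \<Rightarrow> 'g \<Rightarrow> 'g) \<Rightarrow> ('p \<Rightarrow> 'g) \<Rightarrow> bool" where
  "lie_central_ext sp bp sg bg \<pi> \<longleftrightarrow>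
     leibniz_algebra sp bp \<and> leibniz_algebra sg bg \<and> leib_hom sp bp sg bg \<pi> \<and> surj \<pi>
     \<and> {x. \<pi> x = 0} \<subseteq> lie_center bp"

definition lie_stem_ext ::
  "('k::field \<Rightarrow> 'p::ab_group_add \<Rightarrow> 'p) \<Rightarrow> ('p \<Rightarrow> 'p \<Rightarrow> 'p) \<Rightarrow>
   ('k \<Rightarrow> 'g::ab_group_add \<Rightarrow> 'g) \<Rightarrow> ('g \<Rightarrow> 'g \<Rightarrow> 'g) \<Rightarrow> ('p \<Rightarrow> 'g) \<Rightarrow> bool" where
  "lie_stem_ext sp bp sg bg \<pi> \<longleftrightarrow>
     lie_central_ext sp bp sg bg \<pi> \<and> {x. \<pi> x = 0} \<subseteq> leib_ann sp bp"

text \<open>Free (non-associative) magma algebra FM(X) over 'k on the set X = UNIV :: 'a: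
  finitely supported 'k-linear combinations of binary trees with leaves in X.
  The free Leibniz algebra f on X is FM(X)/I, I the two-sided ideal generated by the
  Leibniz relators. We work with preimages in FM(X) of subspaces of f.\<close>

datatype 'a mtree = Leaf 'a | Node "'a mtree" "'a mtree"

definition fm_scale :: "'k::field \<Rightarrow> ('a mtree \<Rightarrow>\<^sub>0 'k) \<Rightarrow> ('a mtree \<Rightarrow>\<^sub>0 'k)" where
  "fm_scale c p = Poly_Mapping.map (\<lambda>v. c * v) p"

definition fm_br :: "('a mtree \<Rightarrow>\<^sub>0 'k::field) \<Rightarrow> ('a mtree \<Rightarrow>\<^sub>0 'k) \<Rightarrow> ('a mtree \<Rightarrow>\<^sub>0 'k)" where
  "fm_br p q = (\<Sum>t\<in>Poly_Mapping.keys p. \<Sum>u\<in>Poly_Mapping.keys q. Poly_Mapping.single (Node t u) (Poly_Mapping.lookup p t * Poly_Mapping.lookup q u))"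

inductive_set leib_ideal :: "('a mtree \<Rightarrow>\<^sub>0 'k::field) set" where
  rel: "fm_br x (fm_br y z) - (fm_br (fm_br x y) z - fm_br (fm_br x z) y) \<in> leib_ideal"
| zero: "0 \<in> leib_ideal"
| add: "p \<in> leib_ideal \<Longrightarrow> q \<in> leib_ideal \<Longrightarrow> p + q \<in> leib_ideal"
| scale: "p \<in> leib_ideal \<Longrightarrow> fm_scale c p \<in> leib_ideal"
| left: "p \<in> leib_ideal \<Longrightarrow> fm_br x p \<in> leib_ideal"
| right: "p \<in> leib_ideal \<Longrightarrow> fm_br p x \<in> leib_ideal"

definition set_sum :: "'v::plus set \<Rightarrow> 'v set \<Rightarrow> 'v set" where
  "set_sum A B = {x + y | x y. x \<in> A \<and> y \<in> B}"

primrec tree_eval :: "('a \<Rightarrow> 'a \<Rightarrow> 'a) \<Rightarrow> 'a mtree \<Rightarrow> 'a" where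
  "tree_eval b (Leaf x) = x"
| "tree_eval b (Node t u) = b (tree_eval b t) (tree_eval b u)"

text \<open>The canonical map FM(g) -> g (generators = elements of g).\<close>
definition fm_eval :: "('k::field \<Rightarrow> 'g::ab_group_add \<Rightarrow> 'g) \<Rightarrow> ('g \<Rightarrow> 'g \<Rightarrow> 'g) \<Rightarrow> ('g mtree \<Rightarrow>\<^sub>0 'k) \<Rightarrow> 'g" where
  "fm_eval s b p = (\<Sum>t\<in>Poly_Mapping.keys p. s (Poly_Mapping.lookup p t) (tree_eval b t))"

text \<open>Preimage in FM(g) of r = kernel of the free presentation f -> g.\<close>
definition pres_rel :: "('k::field \<Rightarrow> 'g::ab_group_add \<Rightarrow> 'g) \<Rightarrow> ('g \<Rightarrow> 'g \<Rightarrow> 'g) \<Rightarrow> ('g mtree \<Rightarrow>\<^sub>0 'k) set" where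
  "pres_rel s b = {p. fm_eval s b p = 0}"

text \<open>Preimage of r \<inter> [f,f]_Lie (numerator of the multiplier).\<close>
definition mult_num :: "('k::field \<Rightarrow> 'g::ab_group_add \<Rightarrow> 'g) \<Rightarrow> ('g \<Rightarrow> 'g \<Rightarrow> 'g) \<Rightarrow> ('g mtree \<Rightarrow>\<^sub>0 'k) set" where
  "mult_num s b = pres_rel s b \<inter> set_sum (lie_sym fm_scale fm_br UNIV UNIV) leib_ideal"

text \<open>Preimage of [f,r]_Lie (denominator of the multiplier).\<close>
definition mult_den :: "('k::field \<Rightarrow> 'g::ab_group_add \<Rightarrow> 'g) \<Rightarrow> ('g \<Rightarrow> 'g \<Rightarrow> 'g) \<Rightarrow> ('g mtree \<Rightarrow>\<^sub>0 'k) set" where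
  "mult_den s b = set_sum (lie_sym fm_scale fm_br UNIV (pres_rel s b)) leib_ideal"

text \<open>M^Lie(g) = (r \<inter> [f,f]_Lie)/[f,r]_Lie is finite-dimensional.\<close>
definition fin_dim_lie_multiplier :: "('k::field \<Rightarrow> 'g::ab_group_add \<Rightarrow> 'g) \<Rightarrow> ('g \<Rightarrow> 'g \<Rightarrow> 'g) \<Rightarrow> bool" where
  "fin_dim_lie_multiplier s b \<longleftrightarrow>
     (\<exists>S. finite S \<and> S \<subseteq> mult_num s b \<and> mult_num s b \<subseteq> module.span fm_scale (S \<union> mult_den s b))"

definition fm_map :: "('p \<Rightarrow> 'g) \<Rightarrow> ('p mtree \<Rightarrow>\<^sub>0 'k::field) \<Rightarrow> ('g mtree \<Rightarrow>\<^sub>0 'k)" where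
  "fm_map \<pi> p = (\<Sum>t\<in>Poly_Mapping.keys p. Poly_Mapping.single (map_mtree \<pi> t) (Poly_Mapping.lookup p t))"

text \<open>Lie-stem cover: the induced map M^Lie(p) -> M^Lie(g) is zero.\<close>
definition lie_stem_cover ::
  "('k::field \<Rightarrow> 'p::ab_group_add \<Rightarrow> 'p) \<Rightarrow> ('p \<Rightarrow> 'p \<Rightarrow> 'p) \<Rightarrow>
   ('k \<Rightarrow> 'g::ab_group_add \<Rightarrow> 'g) \<Rightarrow> ('g \<Rightarrow> 'g \<Rightarrow> 'g) \<Rightarrow> ('p \<Rightarrow> 'g) \<Rightarrow> bool" where
  "lie_stem_cover sp bp sg bg \<pi> \<longleftrightarrow>
     lie_stem_ext sp bp sg bg \<pi> \<and> fm_map \<pi> ` mult_num sp bp \<subseteq> mult_den sg bg"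

text \<open>C(pi x, pi y) = [x,y]+[y,x].\<close>
definition commC :: "('p::ab_group_add \<Rightarrow> 'p \<Rightarrow> 'p) \<Rightarrow> ('p \<Rightarrow> 'q) \<Rightarrow> 'q \<Rightarrow> 'q \<Rightarrow> 'p" where
  "commC b \<pi> a c = (let x = (SOME x. \<pi> x = a); y = (SOME y. \<pi> y = c) in b x y + b y x)"

definition lie_isoclinic ::
  "('k::field \<Rightarrow> 'g1::ab_group_add \<Rightarrow> 'g1) \<Rightarrow> ('g1 \<Rightarrow> 'g1 \<Rightarrow> 'g1) \<Rightarrow>
   ('k \<Rightarrow> 'q1::ab_group_add \<Rightarrow> 'q1) \<Rightarrow> ('q1 \<Rightarrow> 'q1 \<Rightarrow> 'q1) \<Rightarrow> ('g1 \<Rightarrow> 'q1) \<Rightarrow>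
   ('k \<Rightarrow> 'g2::ab_group_add \<Rightarrow> 'g2) \<Rightarrow> ('g2 \<Rightarrow> 'g2 \<Rightarrow> 'g2) \<Rightarrow>
   ('k \<Rightarrow> 'q2::ab_group_add \<Rightarrow> 'q2) \<Rightarrow> ('q2 \<Rightarrow> 'q2 \<Rightarrow> 'q2) \<Rightarrow> ('g2 \<Rightarrow> 'q2) \<Rightarrow> bool" where
  "lie_isoclinic s1 b1 sq1 bq1 \<pi>1 s2 b2 sq2 bq2 \<pi>2 \<longleftrightarrow>
     (\<exists>\<eta> \<xi>.
        bij \<eta> \<and> leib_hom sq1 bq1 sq2 bq2 \<eta>
      \<and> bij_betw \<xi> (lie_sym s1 b1 UNIV UNIV) (lie_sym s2 b2 UNIV UNIV)
      \<and> (\<forall>x\<in>lie_sym s1 b1 UNIV UNIV. \<forall>y\<in>lie_sym s1 b1 UNIV UNIV.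
            \<xi> (x + y) = \<xi> x + \<xi> y \<and> \<xi> (b1 x y) = b2 (\<xi> x) (\<xi> y))
      \<and> (\<forall>c. \<forall>x\<in>lie_sym s1 b1 UNIV UNIV. \<xi> (s1 c x) = s2 c (\<xi> x))
      \<and> (\<forall>a c. \<xi> (commC b1 \<pi>1 a c) = commC b2 \<pi>2 (\<eta> a) (\<eta> c)))"

end

theory Submission
  imports Defs
begin

lemma lookup_fm_scale[simp]: "Poly_Mapping.lookup (fm_scale c p) t = c * Poly_Mapping.lookup p t"
  unfolding fm_scale_def by (simp add: Poly_Mapping.map.rep_eq when_def)

lemma keys_fm_scale: "Poly_Mapping.keys (fm_scale c p) \<subseteq> Poly_Mapping.keys p"
  by (auto simp: in_keys_iff)

lemma vs_fm: "vector_space (fm_scale :: 'k::field \<Rightarrow> ('a mtree \<Rightarrow>\<^sub>0 'k) \<Rightarrow> _)"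
  unfolding vector_space_def
  by (auto simp: poly_mapping_eq_iff lookup_add algebra_simps fun_eq_iff)

lemma module_fm: "module (fm_scale :: 'k::field \<Rightarrow> ('a mtree \<Rightarrow>\<^sub>0 'k) \<Rightarrow> _)"
  using vs_fm module_iff_vector_space by blast

definition lin :: "('t \<Rightarrow> 'k::zero \<Rightarrow> 'v::comm_monoid_add) \<Rightarrow> ('t \<Rightarrow>\<^sub>0 'k) \<Rightarrow> 'v" where
  "lin g p = (\<Sum>t\<in>Poly_Mapping.keys p. g t (Poly_Mapping.lookup p t))"

lemma lin_superset:
  assumes "finite K" "Poly_Mapping.keys p \<subseteq> K" "\<And>t. g t 0 = 0"
  shows "lin g p = (\<Sum>t\<in>K. g t (Poly_Mapping.lookup p t))"
  unfolding lin_def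
  by (rule sum.mono_neutral_left) (use assms in \<open>auto simp: in_keys_iff\<close>)

lemma lin_add:
  fixes g :: "'t \<Rightarrow> 'k::monoid_add \<Rightarrow> 'v::comm_monoid_add"
  assumes "\<And>t. g t 0 = 0" "\<And>t a b. g t (a + b) = g t a + g t b"
  shows "lin g (p + q) = lin g p + lin g q"
proof -
  let ?K = "Poly_Mapping.keys p \<union> Poly_Mapping.keys q"
  have "lin g (p + q) = (\<Sum>t\<in>?K. g t (Poly_Mapping.lookup (p+q) t))"
    using assms keys_add[of p q] by (intro lin_superset) auto
  also have "\<dots> = (\<Sum>t\<in>?K. g t (Poly_Mapping.lookup p t)) + (\<Sum>t\<in>?K. g t (Poly_Mapping.lookup q t))"
    by (simp add: lookup_add assms sum.distrib)
  also have "\<dots> = lin g p + lin g q"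
    by (subst (1 2) lin_superset[of ?K]) (use assms in auto)
  finally show ?thesis .
qed

lemma lin_scale:
  assumes "\<And>t. g t 0 = 0"
  shows "lin g (fm_scale c p) = (\<Sum>t\<in>Poly_Mapping.keys p. g t (c * Poly_Mapping.lookup p t))"
  by (subst lin_superset[of "Poly_Mapping.keys p"]) (use assms keys_fm_scale in auto)

lemma lin_single:
  assumes "\<And>t. g t 0 = 0"
  shows "lin g (Poly_Mapping.single t c) = g t c"
  unfolding lin_def using assms by auto

definition ev :: "('k::field \<Rightarrow> 'v::ab_group_add \<Rightarrow> 'v) \<Rightarrow> ('v \<Rightarrow> 'v \<Rightarrow> 'v) \<Rightarrow> ('a \<Rightarrow> 'v) \<Rightarrow> ('a mtree \<Rightarrow>\<^sub>0 'k) \<Rightarrow> 'v" where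
  "ev s b h p = lin (\<lambda>t c. s c (tree_eval b (map_mtree h t))) p"

lemma fm_eval_ev: "fm_eval s b = ev s b id"
  by (simp add: fun_eq_iff fm_eval_def ev_def lin_def mtree.map_id)

lemma leibD:
  assumes "leibniz_algebra s b"
  shows "vector_space s" "module s" "b x (y + z) = b x y + b x z" "b (x + y) z = b x z + b y z"
    "b (s c x) y = s c (b x y)" "b x (s c y) = s c (b x y)"
    "b x (b y z) = b (b x y) z - b (b x z) y"
  using assms unfolding leibniz_algebra_def by (auto simp: module_iff_vector_space)

lemma leib_bil:
  assumes "leibniz_algebra s b"
  shows "b 0 y = 0" "b x 0 = 0" "b (sum f A) y = (\<Sum>a\<in>A. b (f a) y)" "b x (sum f A) = (\<Sum>a\<in>A. b x (f a))"
    "b (x - x') y = b x y - b x' y" "b x (y - y') = b x y - b x y'"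
proof -
  interpret l: additive "\<lambda>x. b x y" for y by standard (rule leibD(4)[OF assms])
  interpret r: additive "\<lambda>y. b x y" for x by standard (rule leibD(3)[OF assms])
  show "b 0 y = 0" "b x 0 = 0" "b (sum f A) y = (\<Sum>a\<in>A. b (f a) y)" "b x (sum f A) = (\<Sum>a\<in>A. b x (f a))"
    "b (x - x') y = b x y - b x' y" "b x (y - y') = b x y - b x y'"
    using l.zero r.zero l.sum r.sum l.diff r.diff by auto
qed

lemma ev_linear:
  assumes "leibniz_algebra s b"
  shows "Vector_Spaces.linear fm_scale s (ev s b h)"
proof -
  interpret m: module s by (rule leibD(2)[OF assms])
  show ?thesis
    unfolding Vector_Spaces.linear_iff
  proof (intro conjI allI)
    show "vector_space fm_scale" by (rule vs_fm)
    show "vector_space s" by (rule leibD(1)[OF assms])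
    fix x y
    show "ev s b h (x + y) = ev s b h x + ev s b h y"
      unfolding ev_def by (rule lin_add) (auto simp: m.scale_left_distrib)
  next
    fix c x
    show "ev s b h (fm_scale c x) = s c (ev s b h x)"
      unfolding ev_def by (subst lin_scale) (auto simp: lin_def m.scale_sum_right)
  qed
qed

lemma ev_single:
  assumes "leibniz_algebra s b"
  shows "ev s b h (Poly_Mapping.single t c) = s c (tree_eval b (map_mtree h t))"
proof -
  interpret m: module s by (rule leibD(2)[OF assms])
  show ?thesis unfolding ev_def by (subst lin_single) auto
qed

lemma ev_br:
  assumes "leibniz_algebra s b"
  shows "ev s b h (fm_br p q) = b (ev s b h p) (ev s b h q)"
proof -
  interpret m: module s by (rule leibD(2)[OF assms])
  interpret L: module_hom fm_scale s "ev s b h"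
    using ev_linear[OF assms] by (simp add: linear_iff_module_hom)
  let ?T = "\<lambda>t. tree_eval b (map_mtree h t)"
  have "ev s b h (fm_br p q) = (\<Sum>t\<in>Poly_Mapping.keys p. \<Sum>u\<in>Poly_Mapping.keys q.
        b (s (Poly_Mapping.lookup p t) (?T t)) (s (Poly_Mapping.lookup q u) (?T u)))"
    unfolding fm_br_def L.sum by (simp add: ev_single[OF assms] leibD[OF assms] mult.commute)
  also have "\<dots> = b (ev s b h p) (ev s b h q)"
    unfolding ev_def lin_def by (simp add: leib_bil[OF assms]) (rule sum.swap)
  finally show ?thesis .
qed

lemma ev_ideal:
  assumes "leibniz_algebra s b" "p \<in> leib_ideal"
  shows "ev s b h p = 0"
proof -
  interpret m: module s by (rule leibD(2)[OF assms(1)])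
  interpret L: module_hom fm_scale s "ev s b h"
    using ev_linear[OF assms(1)] by (simp add: linear_iff_module_hom)
  show ?thesis using assms(2)
    by induct (auto simp: L.diff L.add L.scale ev_br[OF assms(1)] leibD(7)[OF assms(1)] leib_bil[OF assms(1)])
qed


lemma fm_scale_single: "fm_scale c (Poly_Mapping.single t a) = Poly_Mapping.single t (c * a)"
  by (simp add: poly_mapping_eq_iff fun_eq_iff lookup_single when_def)

lemma fm_map_lin: "fm_map \<pi> = lin (\<lambda>t c. Poly_Mapping.single (map_mtree \<pi> t) c)"
  by (simp add: fun_eq_iff fm_map_def lin_def)

lemma fm_map_linear: "Vector_Spaces.linear fm_scale fm_scale (fm_map \<pi>)"
  unfolding Vector_Spaces.linear_iff
proof (intro conjI allI)
  show "vector_space fm_scale" by (rule vs_fm)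
  show "vector_space fm_scale" by (rule vs_fm)
  fix x y
  show "fm_map \<pi> (x + y) = fm_map \<pi> x + fm_map \<pi> y"
    unfolding fm_map_lin by (rule lin_add) (auto simp: single_add)
next
  fix c x
  interpret m: module fm_scale by (rule module_fm)
  show "fm_map \<pi> (fm_scale c x) = fm_scale c (fm_map \<pi> x)"
    unfolding fm_map_lin by (subst lin_scale) (auto simp: lin_def m.scale_sum_right fm_scale_single)
qed

lemma fm_map_single: "fm_map \<pi> (Poly_Mapping.single t c) = Poly_Mapping.single (map_mtree \<pi> t) c"
  unfolding fm_map_lin by (rule lin_single) simp

lemma fm_br_single: "fm_br (Poly_Mapping.single t 1) (Poly_Mapping.single u 1) = (Poly_Mapping.single (Node t u) 1 :: 'a mtree \<Rightarrow>\<^sub>0 'k::field)"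
  unfolding fm_br_def by simp

lemma central_C_indep:
  assumes "lie_central_ext sp bp sg bg \<pi>" "\<pi> x = \<pi> x'" "\<pi> y = \<pi> y'"
  shows "bp x y + bp y x = bp x' y' + bp y' x'"
proof -
  have L: "leibniz_algebra sp bp" and H: "leib_hom sp bp sg bg \<pi>" and Z: "{x. \<pi> x = 0} \<subseteq> lie_center bp"
    using assms(1) unfolding lie_central_ext_def by auto
  interpret h: module_hom sp sg \<pi> using H unfolding leib_hom_def by (simp add: linear_iff_module_hom)
  define m where "m = x' - x"
  define n where "n = y' - y"
  have "\<pi> m = 0" "\<pi> n = 0" by (simp_all add: m_def n_def h.diff assms(2,3))
  then have "m \<in> lie_center bp" "n \<in> lie_center bp" using Z by auto
  then have m: "\<And>z. bp z m + bp m z = 0" and n: "\<And>z. bp z n + bp n z = 0" unfolding lie_center_def by auto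
  have "bp x' y' + bp y' x' = bp (x + m) (y + n) + bp (y + n) (x + m)" by (simp add: m_def n_def)
  also have "\<dots> = (bp x y + bp y x) + (bp x n + bp n x) + (bp m y + bp y m) + (bp m n + bp n m)"
    by (simp add: leibD[OF L] algebra_simps)
  also have "\<dots> = bp x y + bp y x" using m[of y] m[of n] n[of x] by (simp add: add.commute)
  finally show ?thesis by simp
qed

lemma tree_eval_hom:
  assumes "\<And>x y. f (b1 x y) = b2 (f x) (f y)"
  shows "f (tree_eval b1 (map_mtree h t)) = tree_eval b2 (map_mtree (f \<circ> h) t)"
  by (induct t) (auto simp: assms)

lemma hom_ev:
  assumes "leibniz_algebra s2 b2" "leibniz_algebra s b" "leib_hom s2 b2 s b \<pi>"
  shows "\<pi> (ev s2 b2 h p) = ev s b (\<pi> \<circ> h) p"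
proof -
  interpret h: module_hom s2 s \<pi> using assms(3) unfolding leib_hom_def by (simp add: linear_iff_module_hom)
  show ?thesis unfolding ev_def lin_def h.sum h.scale
    using assms(3) unfolding leib_hom_def by (simp add: tree_eval_hom)
qed

definition sec :: "('p \<Rightarrow> 'g) \<Rightarrow> 'g \<Rightarrow> 'p" where "sec \<pi> a = (SOME x. \<pi> x = a)"

lemma sec_surj: "surj \<pi> \<Longrightarrow> \<pi> (sec \<pi> a) = a"
  unfolding sec_def by (metis (mono_tags, lifting) someI_ex surjD)

lemma fm_eval_sec:
  assumes "lie_central_ext s2 b2 s b \<pi>2"
  shows "\<pi>2 (ev s2 b2 (sec \<pi>2) p) = fm_eval s b p"
proof -
  have "\<pi>2 \<circ> sec \<pi>2 = id" using assms sec_surj unfolding lie_central_ext_def by (auto simp: fun_eq_iff)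
  have "\<pi>2 (ev s2 b2 (sec \<pi>2) p) = ev s b (\<pi>2 \<circ> sec \<pi>2) p"
    by (rule hom_ev) (use assms in \<open>auto simp: lie_central_ext_def\<close>)
  also have "\<dots> = fm_eval s b p" using \<open>\<pi>2 \<circ> sec \<pi>2 = id\<close> by (simp add: fm_eval_ev)
  finally show ?thesis .
qed

lemma ev_kills_den:
  assumes "lie_central_ext s2 b2 s b \<pi>2" "Q \<in> mult_den s b"
  shows "ev s2 b2 (sec \<pi>2) Q = 0"
proof -
  have L2: "leibniz_algebra s2 b2" and Z: "{x. \<pi>2 x = 0} \<subseteq> lie_center b2"
    using assms(1) unfolding lie_central_ext_def by auto
  interpret E: module_hom fm_scale s2 "ev s2 b2 (sec \<pi>2)"
    using ev_linear[OF L2] by (simp add: linear_iff_module_hom)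
  obtain x y where Q: "Q = x + y" and x: "x \<in> lie_sym fm_scale fm_br UNIV (pres_rel s b)" and y: "y \<in> leib_ideal"
    using assms(2) unfolding mult_den_def set_sum_def by auto
  have "ev s2 b2 (sec \<pi>2) x = 0"
    using x unfolding lie_sym_def
  proof (induct rule: E.m1.span_induct)
    case base show ?case by (rule E.subspace_kernel)
  next
    case (step z)
    then obtain t r where z: "z = fm_br t r + fm_br r t" and r: "r \<in> pres_rel s b" by auto
    have "\<pi>2 (ev s2 b2 (sec \<pi>2) r) = 0" using r fm_eval_sec[OF assms(1)] unfolding pres_rel_def by simp
    then have "ev s2 b2 (sec \<pi>2) r \<in> lie_center b2" using Z by auto
    then have "\<And>u. b2 u (ev s2 b2 (sec \<pi>2) r) + b2 (ev s2 b2 (sec \<pi>2) r) u = 0"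
      unfolding lie_center_def by auto
    then show ?case unfolding z E.add ev_br[OF L2] by (metis add.commute)
  qed
  then show ?thesis using Q ev_ideal[OF L2 y] E.add by simp
qed

lemma ann0:
  assumes "leibniz_algebra s b" "y \<in> lie_sym s b UNIV UNIV"
  shows "b x y = 0"
proof -
  interpret m: module s by (rule leibD(2)[OF assms(1)])
  show ?thesis using assms(2) unfolding lie_sym_def
  proof (induct rule: m.span_induct)
    case base show ?case
      by (rule m.subspaceI) (auto simp: leib_bil[OF assms(1)] leibD[OF assms(1)])
  next
    case (step z)
    then show ?case by (auto simp: leibD[OF assms(1)] leib_bil[OF assms(1)])
  qed
qed


definition xi where
  "xi s1 b1 \<pi>1 s2 b2 \<pi>2 v = ev s2 b2 (sec \<pi>2) (fm_map \<pi>1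
     (SOME P. P \<in> lie_sym fm_scale fm_br UNIV UNIV \<and> fm_eval s1 b1 P = v))"

lemma fm_eval_single: "leibniz_algebra s b \<Longrightarrow> fm_eval s b (Poly_Mapping.single (Leaf x) 1) = x"
  by (simp add: fm_eval_ev ev_single leibD(2) module.scale_one)

context
  fixes s :: "'k::field \<Rightarrow> 'g::ab_group_add \<Rightarrow> 'g" and b
    and s1 :: "'k \<Rightarrow> 'p1::ab_group_add \<Rightarrow> 'p1" and b1 \<pi>1
    and s2 :: "'k \<Rightarrow> 'p2::ab_group_add \<Rightarrow> 'p2" and b2 \<pi>2
  assumes C1: "lie_central_ext s1 b1 s b \<pi>1" and C2: "lie_central_ext s2 b2 s b \<pi>2"
    and cov: "fm_map \<pi>1 ` mult_num s1 b1 \<subseteq> mult_den s b"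
begin

lemma L1: "leibniz_algebra s1 b1" using C1 unfolding lie_central_ext_def by auto
lemma L2: "leibniz_algebra s2 b2" using C2 unfolding lie_central_ext_def by auto

lemma Psi_hom: "module_hom fm_scale s2 (\<lambda>P. ev s2 b2 (sec \<pi>2) (fm_map \<pi>1 P))"
proof -
  interpret E: module_hom fm_scale s2 "ev s2 b2 (sec \<pi>2)"
    using ev_linear[OF L2] by (simp add: linear_iff_module_hom)
  interpret M: module_hom fm_scale fm_scale "fm_map \<pi>1"
    using fm_map_linear by (simp add: linear_iff_module_hom)
  show ?thesis by unfold_locales (simp_all add: E.add E.scale M.add M.scale)
qed

lemma Psi_kill: "P \<in> mult_num s1 b1 \<Longrightarrow> ev s2 b2 (sec \<pi>2) (fm_map \<pi>1 P) = 0"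
  using cov ev_kills_den[OF C2] by blast

lemma surjL:
  assumes "v \<in> lie_sym s1 b1 UNIV UNIV"
  shows "\<exists>P. P \<in> lie_sym fm_scale fm_br UNIV UNIV \<and> fm_eval s1 b1 P = v"
proof -
  interpret F: module_hom fm_scale s1 "fm_eval s1 b1"
    using ev_linear[OF L1] by (simp add: linear_iff_module_hom fm_eval_ev)
  let ?GF = "{fm_br x y + fm_br y x |x y. x \<in> (UNIV :: ('p1 mtree \<Rightarrow>\<^sub>0 'k) set) \<and> y \<in> UNIV}"
  have "{b1 x y + b1 y x |x y. x \<in> UNIV \<and> y \<in> UNIV} \<subseteq> fm_eval s1 b1 ` ?GF"
  proof
    fix z assume "z \<in> {b1 x y + b1 y x |x y. x \<in> UNIV \<and> y \<in> UNIV}"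
    then obtain x y where z: "z = b1 x y + b1 y x" by auto
    let ?X = "Poly_Mapping.single (Leaf x) (1::'k)" and ?Y = "Poly_Mapping.single (Leaf y) (1::'k)"
    have "fm_eval s1 b1 (fm_br ?X ?Y + fm_br ?Y ?X) = z"
      unfolding z F.add by (simp add: fm_eval_ev ev_br[OF L1] fm_eval_single[OF L1, unfolded fm_eval_ev])
    then show "z \<in> fm_eval s1 b1 ` ?GF" by blast
  qed
  then have "lie_sym s1 b1 UNIV UNIV \<subseteq> F.m2.span (fm_eval s1 b1 ` ?GF)"
    unfolding lie_sym_def by (rule F.m2.span_mono)
  also have "\<dots> = fm_eval s1 b1 ` lie_sym fm_scale fm_br UNIV UNIV"
    unfolding lie_sym_def by (rule F.span_image)
  finally show ?thesis using assms by blast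
qed

lemma xi_eq:
  assumes "P \<in> lie_sym fm_scale fm_br UNIV UNIV"
  shows "xi s1 b1 \<pi>1 s2 b2 \<pi>2 (fm_eval s1 b1 P) = ev s2 b2 (sec \<pi>2) (fm_map \<pi>1 P)"
proof -
  interpret F: module_hom fm_scale s1 "fm_eval s1 b1"
    using ev_linear[OF L1] by (simp add: linear_iff_module_hom fm_eval_ev)
  interpret Q: module_hom fm_scale s2 "\<lambda>P. ev s2 b2 (sec \<pi>2) (fm_map \<pi>1 P)" by (rule Psi_hom)
  define Q where "Q = (SOME Q. Q \<in> lie_sym fm_scale fm_br UNIV UNIV \<and> fm_eval s1 b1 Q = fm_eval s1 b1 P)"
  have "Q \<in> lie_sym fm_scale fm_br UNIV UNIV \<and> fm_eval s1 b1 Q = fm_eval s1 b1 P"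
    unfolding Q_def by (rule someI[of _ P]) (use assms in auto)
  then have "P - Q \<in> lie_sym fm_scale fm_br UNIV UNIV" "fm_eval s1 b1 (P - Q) = 0"
    using assms unfolding lie_sym_def by (auto intro: F.m1.span_diff simp: F.diff)
  then have "P - Q \<in> mult_num s1 b1"
    unfolding mult_num_def pres_rel_def set_sum_def using leib_ideal.zero by force
  then have "ev s2 b2 (sec \<pi>2) (fm_map \<pi>1 (P - Q)) = 0" by (rule Psi_kill)
  then show ?thesis unfolding xi_def Q_def[symmetric] Q.diff by simp
qed


lemma xi_gen:
  "xi s1 b1 \<pi>1 s2 b2 \<pi>2 (b1 x y + b1 y x) =
     b2 (sec \<pi>2 (\<pi>1 x)) (sec \<pi>2 (\<pi>1 y)) + b2 (sec \<pi>2 (\<pi>1 y)) (sec \<pi>2 (\<pi>1 x))"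
proof -
  interpret F: module_hom fm_scale s1 "fm_eval s1 b1"
    using ev_linear[OF L1] by (simp add: linear_iff_module_hom fm_eval_ev)
  interpret Q: module_hom fm_scale s2 "\<lambda>P. ev s2 b2 (sec \<pi>2) (fm_map \<pi>1 P)" by (rule Psi_hom)
  interpret m2: module s2 using leibD(2)[OF L2] .
  let ?X = "Poly_Mapping.single (Leaf x) (1::'k)" and ?Y = "Poly_Mapping.single (Leaf y) (1::'k)"
  let ?P = "fm_br ?X ?Y + fm_br ?Y ?X"
  have P: "?P \<in> lie_sym fm_scale fm_br UNIV UNIV"
    unfolding lie_sym_def by (rule F.m1.span_base) blast
  have "fm_eval s1 b1 ?P = b1 x y + b1 y x"
    unfolding F.add by (simp add: fm_eval_ev ev_br[OF L1] fm_eval_single[OF L1, unfolded fm_eval_ev])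
  then have "xi s1 b1 \<pi>1 s2 b2 \<pi>2 (b1 x y + b1 y x) = ev s2 b2 (sec \<pi>2) (fm_map \<pi>1 ?P)"
    using xi_eq[OF P] by simp
  also have "\<dots> = b2 (sec \<pi>2 (\<pi>1 x)) (sec \<pi>2 (\<pi>1 y)) + b2 (sec \<pi>2 (\<pi>1 y)) (sec \<pi>2 (\<pi>1 x))"
    unfolding Q.add by (simp add: fm_br_single fm_map_single ev_single[OF L2])
  finally show ?thesis .
qed

lemma xi_zero: "xi s1 b1 \<pi>1 s2 b2 \<pi>2 0 = 0"
proof -
  interpret F: module_hom fm_scale s1 "fm_eval s1 b1"
    using ev_linear[OF L1] by (simp add: linear_iff_module_hom fm_eval_ev)
  interpret Q: module_hom fm_scale s2 "\<lambda>P. ev s2 b2 (sec \<pi>2) (fm_map \<pi>1 P)" by (rule Psi_hom)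
  show ?thesis using xi_eq[of 0] F.m1.span_zero unfolding lie_sym_def by simp
qed

lemma xi_add:
  assumes "v \<in> lie_sym s1 b1 UNIV UNIV" "w \<in> lie_sym s1 b1 UNIV UNIV"
  shows "xi s1 b1 \<pi>1 s2 b2 \<pi>2 (v + w) = xi s1 b1 \<pi>1 s2 b2 \<pi>2 v + xi s1 b1 \<pi>1 s2 b2 \<pi>2 w"
proof -
  interpret F: module_hom fm_scale s1 "fm_eval s1 b1"
    using ev_linear[OF L1] by (simp add: linear_iff_module_hom fm_eval_ev)
  interpret Q: module_hom fm_scale s2 "\<lambda>P. ev s2 b2 (sec \<pi>2) (fm_map \<pi>1 P)" by (rule Psi_hom)
  obtain P where P: "P \<in> lie_sym fm_scale fm_br UNIV UNIV" "fm_eval s1 b1 P = v" using surjL[OF assms(1)] by blast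
  obtain R where R: "R \<in> lie_sym fm_scale fm_br UNIV UNIV" "fm_eval s1 b1 R = w" using surjL[OF assms(2)] by blast
  have PR: "P + R \<in> lie_sym fm_scale fm_br UNIV UNIV" using P(1) R(1) unfolding lie_sym_def by (rule F.m1.span_add)
  show ?thesis using xi_eq[OF PR] xi_eq[OF P(1)] xi_eq[OF R(1)] P R by (simp add: F.add Q.add)
qed

lemma xi_scale:
  assumes "v \<in> lie_sym s1 b1 UNIV UNIV"
  shows "xi s1 b1 \<pi>1 s2 b2 \<pi>2 (s1 c v) = s2 c (xi s1 b1 \<pi>1 s2 b2 \<pi>2 v)"
proof -
  interpret F: module_hom fm_scale s1 "fm_eval s1 b1"
    using ev_linear[OF L1] by (simp add: linear_iff_module_hom fm_eval_ev)
  interpret Q: module_hom fm_scale s2 "\<lambda>P. ev s2 b2 (sec \<pi>2) (fm_map \<pi>1 P)" by (rule Psi_hom)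
  obtain P where P: "P \<in> lie_sym fm_scale fm_br UNIV UNIV" "fm_eval s1 b1 P = v" using surjL[OF assms(1)] by blast
  have PR: "fm_scale c P \<in> lie_sym fm_scale fm_br UNIV UNIV" using P unfolding lie_sym_def by (intro F.m1.span_scale)
  show ?thesis using xi_eq[OF PR] xi_eq[OF P(1)] P by (simp add: F.scale Q.scale)
qed

lemma xi_into:
  assumes "v \<in> lie_sym s1 b1 UNIV UNIV"
  shows "xi s1 b1 \<pi>1 s2 b2 \<pi>2 v \<in> lie_sym s2 b2 UNIV UNIV"
proof -
  interpret m1: module s1 using leibD(2)[OF L1] .
  interpret m2: module s2 using leibD(2)[OF L2] .
  have "v \<in> lie_sym s1 b1 UNIV UNIV \<and> xi s1 b1 \<pi>1 s2 b2 \<pi>2 v \<in> lie_sym s2 b2 UNIV UNIV"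
    using assms unfolding lie_sym_def
  proof (induct rule: m1.span_induct)
    case base show ?case
      by (rule m1.subspaceI)
        (auto simp: xi_zero xi_add[unfolded lie_sym_def] xi_scale[unfolded lie_sym_def]
          intro: m1.span_add m2.span_add m1.span_scale m2.span_scale m1.span_zero m2.span_zero)
  next
    case (step z)
    then obtain x y where "z = b1 x y + b1 y x" by auto
    then show ?case using step by (auto simp: xi_gen intro!: m1.span_base m2.span_base)
  qed
  then show ?thesis by simp
qed

end


lemma xi_inv:
  assumes C1: "lie_central_ext s1 b1 s b \<pi>1" and C2: "lie_central_ext s2 b2 s b \<pi>2"
    and cov1: "fm_map \<pi>1 ` mult_num s1 b1 \<subseteq> mult_den s b"
    and cov2: "fm_map \<pi>2 ` mult_num s2 b2 \<subseteq> mult_den s b"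
    and v: "v \<in> lie_sym s1 b1 UNIV UNIV"
  shows "xi s2 b2 \<pi>2 s1 b1 \<pi>1 (xi s1 b1 \<pi>1 s2 b2 \<pi>2 v) = v"
proof -
  note A = C1 C2 cov1 and B = C2 C1 cov2
  interpret m1: module s1 using leibD(2)[OF L1[OF A]] .
  define P where "P = (\<lambda>v. v \<in> lie_sym s1 b1 UNIV UNIV \<and> xi s2 b2 \<pi>2 s1 b1 \<pi>1 (xi s1 b1 \<pi>1 s2 b2 \<pi>2 v) = v)"
  have vs: "v \<in> m1.span {b1 x y + b1 y x |x y. x \<in> UNIV \<and> y \<in> UNIV}" using v unfolding lie_sym_def .
  have "P v" using vs
  proof (induct rule: m1.span_induct)
    case base show ?case
    proof (rule m1.subspaceI)
      show "0 \<in> Collect P" unfolding P_def using xi_zero[OF A] xi_zero[OF B] m1.span_zero by (simp add: lie_sym_def)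
    next
      fix x y assume x: "x \<in> Collect P" and y: "y \<in> Collect P"
      then have x1: "x \<in> lie_sym s1 b1 UNIV UNIV" and y1: "y \<in> lie_sym s1 b1 UNIV UNIV"
        by (auto simp: P_def)
      have "xi s2 b2 \<pi>2 s1 b1 \<pi>1 (xi s1 b1 \<pi>1 s2 b2 \<pi>2 x) = x" "xi s2 b2 \<pi>2 s1 b1 \<pi>1 (xi s1 b1 \<pi>1 s2 b2 \<pi>2 y) = y"
        using x y by (auto simp: P_def)
      then have "xi s2 b2 \<pi>2 s1 b1 \<pi>1 (xi s1 b1 \<pi>1 s2 b2 \<pi>2 (x + y)) = x + y"
        using x y by (simp add: xi_add[OF A x1 y1] xi_add[OF B xi_into[OF A x1] xi_into[OF A y1]])
      then show "x + y \<in> Collect P" using x1 y1 unfolding P_def lie_sym_def by (auto intro: m1.span_add)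
    next
      fix c x assume x: "x \<in> Collect P"
      then have x1: "x \<in> lie_sym s1 b1 UNIV UNIV" by (auto simp: P_def)
      have "xi s2 b2 \<pi>2 s1 b1 \<pi>1 (xi s1 b1 \<pi>1 s2 b2 \<pi>2 (s1 c x)) = s1 c x"
        using x by (simp add: P_def xi_scale[OF A x1] xi_scale[OF B xi_into[OF A x1]])
      then show "s1 c x \<in> Collect P" using x1 unfolding P_def lie_sym_def by (auto intro: m1.span_scale)
    qed
  next
    case (step z)
    then obtain x y where z: "z = b1 x y + b1 y x" by auto
    have s1: "surj \<pi>1" and s2: "surj \<pi>2" using C1 C2 unfolding lie_central_ext_def by auto
    have "xi s2 b2 \<pi>2 s1 b1 \<pi>1 (xi s1 b1 \<pi>1 s2 b2 \<pi>2 z) = z"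
      unfolding z xi_gen[OF A] xi_gen[OF B]
      by (rule central_C_indep[OF C1, symmetric]) (simp_all add: sec_surj s1 s2)
    then show ?case using step unfolding P_def lie_sym_def by (auto intro: m1.span_base)
  qed
  then show ?thesis by (simp add: P_def)
qed

theorem mainTheorem13:
  fixes s :: "'k::field \<Rightarrow> 'g::ab_group_add \<Rightarrow> 'g" and b :: "'g \<Rightarrow> 'g \<Rightarrow> 'g"
    and s1 :: "'k \<Rightarrow> 'p1::ab_group_add \<Rightarrow> 'p1" and b1 :: "'p1 \<Rightarrow> 'p1 \<Rightarrow> 'p1" and \<pi>1 :: "'p1 \<Rightarrow> 'g"
    and s2 :: "'k \<Rightarrow> 'p2::ab_group_add \<Rightarrow> 'p2" and b2 :: "'p2 \<Rightarrow> 'p2 \<Rightarrow> 'p2" and \<pi>2 :: "'p2 \<Rightarrow> 'g"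
  assumes "(2::'k) \<noteq> 0"
    and "leibniz_algebra s b"
    and "fin_dim_lie_multiplier s b"
    and "lie_stem_cover s1 b1 s b \<pi>1"
    and "lie_stem_cover s2 b2 s b \<pi>2"
  shows "lie_isoclinic s1 b1 s b \<pi>1 s2 b2 s b \<pi>2"
proof -
  have C1: "lie_central_ext s1 b1 s b \<pi>1" and C2: "lie_central_ext s2 b2 s b \<pi>2"
    and cov1: "fm_map \<pi>1 ` mult_num s1 b1 \<subseteq> mult_den s b"
    and cov2: "fm_map \<pi>2 ` mult_num s2 b2 \<subseteq> mult_den s b"
    using assms(4,5) unfolding lie_stem_cover_def lie_stem_ext_def by auto
  note A = C1 C2 cov1 and B = C2 C1 cov2
  have L1: "leibniz_algebra s1 b1" and L2: "leibniz_algebra s2 b2"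
    and s1: "surj \<pi>1" and s2: "surj \<pi>2" using C1 C2 unfolding lie_central_ext_def by auto
  let ?xi = "xi s1 b1 \<pi>1 s2 b2 \<pi>2"
  show ?thesis unfolding lie_isoclinic_def
  proof (intro exI[of _ id] exI[of _ ?xi] conjI ballI allI)
    show "bij id" by simp
    show "leib_hom s b s b id" unfolding leib_hom_def
      using leibD(1)[OF assms(2)] by (simp add: Vector_Spaces.linear_iff)
    show "bij_betw ?xi (lie_sym s1 b1 UNIV UNIV) (lie_sym s2 b2 UNIV UNIV)"
      by (rule bij_betw_byWitness[where f' = "xi s2 b2 \<pi>2 s1 b1 \<pi>1"])
        (auto simp: xi_inv[OF C1 C2 cov1 cov2] xi_inv[OF C2 C1 cov2 cov1] intro: xi_into[OF A] xi_into[OF B])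
  next
    fix x y assume x: "x \<in> lie_sym s1 b1 UNIV UNIV" and y: "y \<in> lie_sym s1 b1 UNIV UNIV"
    show "?xi (x + y) = ?xi x + ?xi y" by (rule xi_add[OF A x y])
    show "?xi (b1 x y) = b2 (?xi x) (?xi y)"
      using ann0[OF L1 y] ann0[OF L2 xi_into[OF A y]] xi_zero[OF A] by simp
  next
    fix c x assume x: "x \<in> lie_sym s1 b1 UNIV UNIV"
    show "?xi (s1 c x) = s2 c (?xi x)" by (rule xi_scale[OF A x])
  next
    fix a c
    show "?xi (commC b1 \<pi>1 a c) = commC b2 \<pi>2 (id a) (id c)"
      unfolding commC_def Let_def xi_gen[OF A]
      using sec_surj[OF s1] by (simp add: sec_def[symmetric])
  qed
qed

end
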